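(* Let $L$ be an i--lattice. If ${\rm Con}(L)$ is a chain, then ${\rm Con}_{\mathbb{I}}(L)={\rm Con}(L)$.
   Context: An i--lattice is a lattice $L$ with a unary operation $'$ such that $a''=a$ and $a\leq b$ implies $b'\leq a'$ for all $a,b\in L$. ${\rm Con}(L)$ is the lattice of lattice congruences of $L$, and ${\rm Con}_{\mathbb{I}}(L)$ is the set of lattice congruences $\theta$ that also preserve the involution, i.e. $(a,b)\in\theta$ implies $(a',b')\in\theta$. *)

theory Defs
  imports Main
begin

definition i_lattice :: "('a::lattice \<Rightarrow> 'a) \<Rightarrow> bool" where
  "i_lattice f \<longleftrightarrow> (\<forall>a. f (f a) = a) \<and> (\<forall>a b. a \<le> b \<longrightarrow> f b \<le> f a)"

definition Con :: "('a::lattice \<times> 'a) set set" where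
  "Con = {\<theta>. equiv UNIV \<theta> \<and>
      (\<forall>a b c d. (a, b) \<in> \<theta> \<and> (c, d) \<in> \<theta> \<longrightarrow>
         (sup a c, sup b d) \<in> \<theta> \<and> (inf a c, inf b d) \<in> \<theta>)}"

definition Con_I :: "('a::lattice \<Rightarrow> 'a) \<Rightarrow> ('a \<times> 'a) set set" where
  "Con_I f = {\<theta> \<in> Con. \<forall>a b. (a, b) \<in> \<theta> \<longrightarrow> (f a, f b) \<in> \<theta>}"

end

theory Submission
  imports Defs
begin

lemma il_sup:
  fixes f :: "'a::lattice \<Rightarrow> 'a"
  assumes "i_lattice f"
  shows "f (sup a b) = inf (f a) (f b)"
proof -
  have inv: "\<And>x. f (f x) = x" and mo: "\<And>x y. x \<le> y \<Longrightarrow> f y \<le> f x"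
    using assms unfolding i_lattice_def by auto
  have 1: "f (sup a b) \<le> inf (f a) (f b)" by (simp add: mo)
  have "a \<le> f (inf (f a) (f b))" using mo[of "inf (f a) (f b)" "f a"] inv by simp
  moreover have "b \<le> f (inf (f a) (f b))" using mo[of "inf (f a) (f b)" "f b"] inv by simp
  ultimately have "sup a b \<le> f (inf (f a) (f b))" by simp
  hence "inf (f a) (f b) \<le> f (sup a b)" using mo inv by metis
  with 1 show ?thesis by (rule order.antisym)
qed

lemma il_inf:
  fixes f :: "'a::lattice \<Rightarrow> 'a"
  assumes "i_lattice f"
  shows "f (inf a b) = sup (f a) (f b)"
proof -
  have inv: "\<And>x. f (f x) = x"
    using assms unfolding i_lattice_def by auto
  have "f (sup (f a) (f b)) = inf a b" using il_sup[OF assms] inv by simp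
  hence "f (f (sup (f a) (f b))) = f (inf a b)" by simp
  thus ?thesis using inv by simp
qed

lemma image_con:
  fixes f :: "'a::lattice \<Rightarrow> 'a"
  assumes il: "i_lattice f" and t: "\<theta> \<in> Con"
  shows "map_prod f f ` \<theta> \<in> Con"
proof -
  have inv: "\<And>x. f (f x) = x"
    using il unfolding i_lattice_def by auto
  have mem: "\<And>x y. (x, y) \<in> map_prod f f ` \<theta> \<longleftrightarrow> (f x, f y) \<in> \<theta>"
  proof
    fix x y assume "(x, y) \<in> map_prod f f ` \<theta>"
    then obtain u v where "(u,v) \<in> \<theta>" "x = f u" "y = f v" by auto
    thus "(f x, f y) \<in> \<theta>" using inv by simp
  next
    fix x y assume "(f x, f y) \<in> \<theta>"
    hence "map_prod f f (f x, f y) \<in> map_prod f f ` \<theta>" by blast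
    thus "(x, y) \<in> map_prod f f ` \<theta>" using inv by simp
  qed
  from t have eq: "equiv UNIV \<theta>" and cg: "\<And>a b c d. (a, b) \<in> \<theta> \<Longrightarrow> (c, d) \<in> \<theta> \<Longrightarrow>
         (sup a c, sup b d) \<in> \<theta> \<and> (inf a c, inf b d) \<in> \<theta>"
    unfolding Con_def by auto
  have r: "\<And>x. (x, x) \<in> \<theta>" and s: "\<And>x y. (x, y) \<in> \<theta> \<Longrightarrow> (y, x) \<in> \<theta>"
    and tr: "\<And>x y z. (x, y) \<in> \<theta> \<Longrightarrow> (y, z) \<in> \<theta> \<Longrightarrow> (x, z) \<in> \<theta>"
    using eq unfolding equiv_def refl_on_def sym_def trans_def by blast+
  have "equiv UNIV (map_prod f f ` \<theta>)"
  proof (intro equivI refl_onI symI transI)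
    show "map_prod f f ` \<theta> \<subseteq> UNIV \<times> UNIV" by simp
  next
    fix x assume "x \<in> (UNIV::'a set)" show "(x, x) \<in> map_prod f f ` \<theta>" by (simp add: mem r)
  next
    fix x y assume "(x, y) \<in> map_prod f f ` \<theta>"
    thus "(y, x) \<in> map_prod f f ` \<theta>" by (simp add: mem s)
  next
    fix x y z assume "(x, y) \<in> map_prod f f ` \<theta>" "(y, z) \<in> map_prod f f ` \<theta>"
    thus "(x, z) \<in> map_prod f f ` \<theta>" by (simp add: mem) (rule tr)
  qed
  moreover have "(sup a c, sup b d) \<in> map_prod f f ` \<theta> \<and> (inf a c, inf b d) \<in> map_prod f f ` \<theta>"
    if "(a, b) \<in> map_prod f f ` \<theta>" "(c, d) \<in> map_prod f f ` \<theta>" for a b c d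
    using that cg by (simp add: mem il_sup[OF il] il_inf[OF il])
  ultimately show ?thesis unfolding Con_def by blast
qed

theorem corollary4p7:
  fixes f :: "'a::lattice \<Rightarrow> 'a"
  assumes "i_lattice f"
    and "\<forall>\<theta>1\<in>(Con :: ('a \<times> 'a) set set). \<forall>\<theta>2\<in>Con. \<theta>1 \<subseteq> \<theta>2 \<or> \<theta>2 \<subseteq> \<theta>1"
  shows "Con_I f = Con"
proof
  show "Con_I f \<subseteq> Con" unfolding Con_I_def by blast
next
  have inv: "\<And>x. f (f x) = x"
    using assms(1) unfolding i_lattice_def by auto
  show "Con \<subseteq> Con_I f"
  proof
    fix \<theta> :: "('a \<times> 'a) set" assume t: "\<theta> \<in> Con"
    let ?T = "map_prod f f ` \<theta>"
    have T: "?T \<in> Con" by (rule image_con[OF assms(1) t])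
    have "?T \<subseteq> \<theta>"
    proof (cases "\<theta> \<subseteq> ?T")
      case True
      hence "map_prod f f ` \<theta> \<subseteq> map_prod f f ` ?T" by blast
      also have "map_prod f f ` ?T = \<theta>" by (force simp: image_image inv)
      finally show ?thesis .
    next
      case False
      thus ?thesis using assms(2) t T by blast
    qed
    hence "\<forall>a b. (a, b) \<in> \<theta> \<longrightarrow> (f a, f b) \<in> \<theta>" by force
    thus "\<theta> \<in> Con_I f" using t unfolding Con_I_def by blast
  qed
qed

end
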